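(* Assume that $\bar r^j\in\mathrm{recc}(C)$ for every $j\in N_0$, and that $C$ is bounded. Then $$\mathrm{conv}\Big(\Big\{x\in P^B\setminus C:\sum_{j\in N}\frac{x_j}{\alpha_j}\le1\Big\}\Big)=\Big\{x\in P^B:\sum_{j\in N}\frac{x_j}{\alpha_j}\le1\Big\},$$ $$\mathrm{conv}\Big(\Big\{x\in P^B\setminus C:\sum_{j\in N}\frac{x_j}{\beta_j}\ge1\Big\}\Big)=\Big\{x\in P^B:\sum_{j\in N}\frac{x_j}{\beta_j}\ge1\Big\}.$$
   Context: Let $A\in\mathbb{R}^{m\times n}$ have full row rank, $b\in\mathbb{R}^m$, and $P=\{x\in\mathbb{R}^n_+:Ax=b\}$. Let $C\subseteq\mathbb{R}^n$ be an open convex set. Fix a basis $B$ of $P$ with nonbasic set $N=\{1,\dots,n\}\setminus B$. Write $P=\{x:x_i=\bar b_i-\sum_{j\in N}\bar a_{ij}x_j\ (i\in B),\ x\ge0\}$ with $\bar b\ge0$. The basic solution $\bar x$ has $\bar x_i=\bar b_i$ ($i\in B$) and $0$ ($i\in N$). $P^B$ is obtained by dropping $x_i\ge0$ for $i\in B$. For $j\in N$, $\bar r^j$ has $\bar r^j_k=-\bar a_{kj}$ ($k\in B$), $\bar r^j_j=1$, and $0$ otherwise. Thus $P^B=\{\bar x+\sum_{j\in N}x_j\bar r^j:x_j\ge0\}$, and for $x\in P^B$ the $x_j$ ($j\in N$) are the coefficients in this representation. It is assumed that $\bar x\notin\mathrm{cl}(C)$. For $j\in N$, $\alpha_j=\inf\{\lambda\ge0:\bar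 x+\lambda\bar r^j\in C\}$ and $\beta_j=\sup\{\lambda\ge0:\bar x+\lambda\bar r^j\in C\}$, with $\alpha_j=+\infty$, $\beta_j=-\infty$ if the halfline misses $C$. Let $N_0=\{j\in N:\alpha_j=+\infty,\beta_j=-\infty\}$. We use the convention $t/\pm\infty=0$. For a set $K$, $\mathrm{recc}(K)=\{d:x+\lambda d\in K\ \forall x\in K,\lambda\ge0\}$. *)

theory Defs
  imports "HOL-Analysis.Analysis" "HOL-Library.Extended_Real"
begin

text \<open>Index set {1..n} is the finite type 'n, rows {1..m} the finite type 'm.
  A basis B is a set of column indices whose columns are linearly independent
  and of cardinality m (full row rank); it is a basis of P (feasible) when the
  basic solution is nonnegative.\<close>

definition is_basis :: "real^'n^'m \<Rightarrow> 'n set \<Rightarrow> bool" where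
  "is_basis A B \<longleftrightarrow> card B = CARD('m) \<and> inj_on (\<lambda>i. column i A) B
      \<and> \<not> dependent ((\<lambda>i. column i A) ` B)"

definition basic_sol :: "real^'n^'m \<Rightarrow> real^'m \<Rightarrow> 'n set \<Rightarrow> real^'n" where
  "basic_sol A b B = (THE x. A *v x = b \<and> (\<forall>i. i \<notin> B \<longrightarrow> x $ i = 0))"

text \<open>ray rbar^j: rbar^j_j = 1, rbar^j_k = 0 for other nonbasic k, and A rbar^j = 0,
  i.e. rbar^j_k = - abar_kj for basic k\<close>
definition basic_ray :: "real^'n^'m \<Rightarrow> 'n set \<Rightarrow> 'n \<Rightarrow> real^'n" where
  "basic_ray A B j = (THE r. A *v r = 0 \<and> r $ j = 1 \<and>
       (\<forall>k. k \<notin> B \<and> k \<noteq> j \<longrightarrow> r $ k = 0))"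

text \<open>P^B: P with the constraints x_i >= 0 for basic i dropped\<close>
definition PB :: "real^'n^'m \<Rightarrow> real^'m \<Rightarrow> 'n set \<Rightarrow> (real^'n) set" where
  "PB A b B = {x. A *v x = b \<and> (\<forall>j. j \<notin> B \<longrightarrow> 0 \<le> x $ j)}"

definition alpha :: "real^'n \<Rightarrow> real^'n \<Rightarrow> (real^'n) set \<Rightarrow> ereal" where
  "alpha xb r C = Inf (ereal ` {t::real. 0 \<le> t \<and> xb + t *\<^sub>R r \<in> C})"

definition beta :: "real^'n \<Rightarrow> real^'n \<Rightarrow> (real^'n) set \<Rightarrow> ereal" where
  "beta xb r C = Sup (ereal ` {t::real. 0 \<le> t \<and> xb + t *\<^sub>R r \<in> C})"

definition ediv :: "real \<Rightarrow> ereal \<Rightarrow> real" where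
  "ediv t e = (if e = \<infinity> \<or> e = -\<infinity> then 0 else t / real_of_ereal e)"

definition recc :: "('a::real_vector) set \<Rightarrow> 'a set" where
  "recc K = {d. \<forall>x\<in>K. \<forall>t::real. 0 \<le> t \<longrightarrow> x + t *\<^sub>R d \<in> K}"

end

theory Submission
  imports Defs
begin

lemma basis_uniq:
  fixes A :: "real^'n^'m"
  assumes "is_basis A B" "A *v z = 0" "\<forall>k. k \<notin> B \<longrightarrow> z $ k = 0"
  shows "z = 0"
proof -
  let ?c = "\<lambda>i. column i A"
  have inj: "inj_on ?c B" and ind: "independent (?c ` B)" using assms(1) unfolding is_basis_def by auto
  define cc where "cc = (\<lambda>v. z $ (the_inv_into B ?c v))"
  have "A *v z = (\<Sum>i\<in>UNIV. z $ i *s ?c i)" by (rule matrix_mult_sum)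
  also have "\<dots> = (\<Sum>i\<in>B. z $ i *\<^sub>R ?c i)"
    using assms(3) unfolding scalar_mult_eq_scaleR by (intro sum.mono_neutral_right) auto
  also have "\<dots> = (\<Sum>v\<in>?c ` B. cc v *\<^sub>R v)"
    unfolding cc_def using inj the_inv_into_f_f[OF inj] by (simp add: sum.reindex)
  finally have eq: "(\<Sum>v\<in>?c ` B. cc v *\<^sub>R v) = 0" using assms(2) by simp
  have "\<forall>v\<in>?c ` B. cc v = 0" using ind eq unfolding independent_explicit by blast
  then have "\<forall>v\<in>?c ` B. z $ (the_inv_into B ?c v) = 0" unfolding cc_def by simp
  then have "\<forall>i\<in>B. z $ i = 0" using the_inv_into_f_f[OF inj] by auto
  with assms(3) show ?thesis by (metis vec_eq_iff zero_index)
qed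

lemma basis_ex:
  fixes A :: "real^'n^'m"
  assumes "is_basis A B"
  shows "\<exists>z. A *v z = v \<and> (\<forall>k. k \<notin> B \<longrightarrow> z $ k = 0)"
proof -
  let ?c = "\<lambda>i. column i A"
  have inj: "inj_on ?c B" and ind: "independent (?c ` B)" and cB: "card B = CARD('m)"
    using assms(1) unfolding is_basis_def by auto
  have fin: "finite (?c ` B)" using ind by (simp add: independent_explicit)
  have "card (?c ` B) = dim (UNIV :: (real^'m) set)" using inj cB by (simp add: card_image)
  then have "UNIV \<subseteq> span (?c ` B)" using eucl.card_eq_dim[of "?c ` B" UNIV] ind fin by auto
  then have "v \<in> span (?c ` B)" by auto
  then obtain u where u: "v = (\<Sum>w\<in>?c ` B. u w *\<^sub>R w)" using span_finite[OF fin] by auto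
  define z where "z = (\<chi> i. if i \<in> B then u (?c i) else 0)"
  have "A *v z = (\<Sum>i\<in>UNIV. z $ i *s ?c i)" by (rule matrix_mult_sum)
  also have "\<dots> = (\<Sum>i\<in>B. z $ i *\<^sub>R ?c i)"
    unfolding scalar_mult_eq_scaleR by (intro sum.mono_neutral_right) (auto simp: z_def)
  also have "\<dots> = (\<Sum>i\<in>B. u (?c i) *\<^sub>R ?c i)" by (simp add: z_def)
  also have "\<dots> = v" using u inj by (simp add: sum.reindex)
  finally show ?thesis by (auto simp: z_def)
qed

lemma basic_sol_props:
  fixes A :: "real^'n^'m"
  assumes "is_basis A B"
  shows "A *v basic_sol A b B = b" "\<And>i. i \<notin> B \<Longrightarrow> basic_sol A b B $ i = 0"
proof -
  obtain z where z: "A *v z = b \<and> (\<forall>k. k \<notin> B \<longrightarrow> z $ k = 0)" using basis_ex[OF assms] by blast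
  have "\<exists>!x. A *v x = b \<and> (\<forall>i. i \<notin> B \<longrightarrow> x $ i = 0)"
  proof (rule ex1I[of _ z])
    fix y assume y: "A *v y = b \<and> (\<forall>i. i \<notin> B \<longrightarrow> y $ i = 0)"
    have "y - z = 0" using basis_uniq[OF assms, of "y - z"] y z by (simp add: matrix_vector_mult_diff_distrib)
    then show "y = z" by simp
  qed (use z in auto)
  from theI'[OF this] show "A *v basic_sol A b B = b" "\<And>i. i \<notin> B \<Longrightarrow> basic_sol A b B $ i = 0"
    unfolding basic_sol_def by auto
qed

lemma basic_ray_props:
  fixes A :: "real^'n^'m"
  assumes "is_basis A B" "j \<notin> B"
  shows "A *v basic_ray A B j = 0" "basic_ray A B j $ j = 1"
    "\<And>k. k \<notin> B \<Longrightarrow> k \<noteq> j \<Longrightarrow> basic_ray A B j $ k = 0"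
proof -
  obtain z where z: "A *v z = - (A *v axis j 1) \<and> (\<forall>k. k \<notin> B \<longrightarrow> z $ k = 0)" using basis_ex[OF assms(1)] by blast
  define r where "r = z + axis j 1"
  have r: "A *v r = 0 \<and> r $ j = 1 \<and> (\<forall>k. k \<notin> B \<and> k \<noteq> j \<longrightarrow> r $ k = 0)"
    using z assms(2) by (auto simp: r_def matrix_vector_right_distrib axis_def)
  have "\<exists>!x. A *v x = 0 \<and> x $ j = 1 \<and> (\<forall>k. k \<notin> B \<and> k \<noteq> j \<longrightarrow> x $ k = 0)"
  proof (rule ex1I[of _ r])
    fix y assume y: "A *v y = 0 \<and> y $ j = 1 \<and> (\<forall>k. k \<notin> B \<and> k \<noteq> j \<longrightarrow> y $ k = 0)"
    have "y - r = 0" using basis_uniq[OF assms(1), of "y - r"] y r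
      by (simp add: matrix_vector_mult_diff_distrib) (metis)
    then show "y = r" by simp
  qed (use r in auto)
  from theI'[OF this] show "A *v basic_ray A B j = 0" "basic_ray A B j $ j = 1"
    "\<And>k. k \<notin> B \<Longrightarrow> k \<noteq> j \<Longrightarrow> basic_ray A B j $ k = 0"
    unfolding basic_ray_def by auto
qed

lemma ereal_Sup'':
  assumes *: "bdd_above A" "A \<noteq> {}"
  shows "ereal (Sup A) = (SUP a\<in>A. ereal a)"
proof (rule ereal_Sup)
  from * obtain l u where "x \<in> A \<Longrightarrow> x \<le> l" "u \<in> A" for x
    by (auto simp: bdd_above_def)
  then have "(SUP x\<in>A. ereal x) \<le> l" "u \<le> (SUP x\<in>A. ereal x)"
    by (auto intro!: SUP_least SUP_upper)
  then show "\<bar>SUP a\<in>A. ereal a\<bar> \<noteq> \<infinity>"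
    by auto
qed

lemma not_recc:
  fixes C :: "'a::real_normed_vector set"
  assumes "bounded C" "C \<noteq> {}" "d \<noteq> 0"
  shows "d \<notin> recc C"
proof
  assume d: "d \<in> recc C"
  obtain c where c: "c \<in> C" using assms(2) by auto
  obtain M where M: "\<forall>y\<in>C. norm y \<le> M" using assms(1) bounded_iff by blast
  define t where "t = (M + norm c + 1) / norm d"
  have nd: "norm d > 0" using assms(3) by simp
  have t0: "t \<ge> 0" unfolding t_def using M c nd
    by (metis add_nonneg_nonneg divide_nonneg_pos le_add_same_cancel2 norm_ge_zero order.trans zero_le_one)
  have "c + t *\<^sub>R d \<in> C" using d c t0 unfolding recc_def by blast
  then have "norm (c + t *\<^sub>R d) \<le> M" using M by blast
  moreover have "norm (t *\<^sub>R d) \<le> norm (c + t *\<^sub>R d) + norm c"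
    by (metis add_diff_cancel_left' norm_triangle_ineq4 add.commute)
  moreover have M0: "0 \<le> M + norm c + 1" using M c norm_ge_zero order.trans
    by (metis add_nonneg_nonneg zero_le_one)
  moreover have "norm (t *\<^sub>R d) = M + norm c + 1" using t0 nd M0 by (simp add: t_def)
  ultimately show False by linarith
qed

lemma ray_facts:
  fixes C :: "'a::real_normed_vector set"
  assumes "open C" "bounded C" "p \<notin> closure C" "d \<noteq> 0"
    and T: "T = {t. 0 \<le> t \<and> p + t *\<^sub>R d \<in> C}" "T \<noteq> {}"
  shows "Inf (ereal ` T) = ereal (Inf T)" "Sup (ereal ` T) = ereal (Sup T)"
    "0 < Inf T" "p + Inf T *\<^sub>R d \<notin> C" "0 < Sup T" "\<And>t. Sup T \<le> t \<Longrightarrow> p + t *\<^sub>R d \<notin> C"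
proof -
  have nd: "norm d > 0" using assms(4) by simp
  obtain M where M: "\<forall>y\<in>C. norm y \<le> M" using assms(2) bounded_iff by blast
  have up: "t \<le> (M + norm p) / norm d" if "t \<in> T" for t
  proof -
    have t0: "t \<ge> 0" and "p + t *\<^sub>R d \<in> C" using that T by auto
    then have "norm (p + t *\<^sub>R d) \<le> M" using M by blast
    moreover have "norm (t *\<^sub>R d) \<le> norm (p + t *\<^sub>R d) + norm p"
      by (metis add_diff_cancel_left' norm_triangle_ineq4 add.commute)
    moreover have "norm (t *\<^sub>R d) = t * norm d" using t0 by simp
    ultimately show ?thesis using nd by (simp add: field_simps)
  qed
  have bda: "bdd_above T" by (rule bdd_aboveI[of _ "(M + norm p)/norm d"]) (rule up)
  have bdb: "bdd_below T" using T by (auto intro: bdd_belowI[of _ 0])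
  show "Inf (ereal ` T) = ereal (Inf T)" using ereal_Inf'[OF bdb T(2)] by simp
  show "Sup (ereal ` T) = ereal (Sup T)" using ereal_Sup''[OF bda T(2)] by simp
  obtain e where e: "e > 0" "\<forall>y\<in>C. \<not> dist y p < e" using assms(3) closure_approachable by blast
  have low: "e / norm d \<le> t" if "t \<in> T" for t
  proof -
    have t0: "t \<ge> 0" and "p + t *\<^sub>R d \<in> C" using that T by auto
    then have "\<not> dist (p + t *\<^sub>R d) p < e" using e by blast
    then have "e \<le> t * norm d" using t0 by (simp add: dist_norm)
    then show ?thesis using nd by (simp add: field_simps)
  qed
  have "e / norm d \<le> Inf T" using T(2) low by (intro cInf_greatest) auto
  moreover have "0 < e / norm d" using e nd by simp
  ultimately show a0: "0 < Inf T" by linarith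
  show "p + Inf T *\<^sub>R d \<notin> C"
  proof
    assume "p + Inf T *\<^sub>R d \<in> C"
    then obtain eps where eps: "eps > 0" "\<forall>y. dist y (p + Inf T *\<^sub>R d) < eps \<longrightarrow> y \<in> C"
      using assms(1) open_dist by metis
    define del where "del = min (Inf T / 2) (eps / (2 * norm d))"
    have del: "del > 0" "del \<le> Inf T / 2" "del * norm d < eps"
      using a0 eps nd by (auto simp: del_def min_def field_simps)
    have "dist (p + (Inf T - del) *\<^sub>R d) (p + Inf T *\<^sub>R d) = del * norm d"
      using del by (simp add: dist_norm algebra_simps)
    then have "p + (Inf T - del) *\<^sub>R d \<in> C" using eps del by auto
    then have "Inf T - del \<in> T" using T del by auto
    then have "Inf T \<le> Inf T - del" using bdb by (rule cInf_lower)
    then show False using del by simp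
  qed
  obtain t0 where t0: "t0 \<in> T" using T(2) by auto
  have "Inf T \<le> t0" "t0 \<le> Sup T" using t0 bda bdb by (auto intro: cInf_lower cSup_upper)
  then show s0: "0 < Sup T" using a0 by linarith
  show "p + t *\<^sub>R d \<notin> C" if st: "Sup T \<le> t" for t
  proof
    assume "p + t *\<^sub>R d \<in> C"
    then obtain eps where eps: "eps > 0" "\<forall>y. dist y (p + t *\<^sub>R d) < eps \<longrightarrow> y \<in> C"
      using assms(1) open_dist by metis
    define del where "del = eps / (2 * norm d)"
    have del: "del > 0" "del * norm d < eps"
      using eps nd by (auto simp: del_def field_simps)
    have "dist (p + (t + del) *\<^sub>R d) (p + t *\<^sub>R d) = del * norm d"
      using del by (simp add: dist_norm algebra_simps)
    then have "p + (t + del) *\<^sub>R d \<in> C" using eps del by auto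
    then have "t + del \<in> T" using T del st s0 by auto
    then have "t + del \<le> Sup T" using bda by (rule cSup_upper)
    then show False using del st by simp
  qed
qed

definition ptB :: "real^'n^'m \<Rightarrow> real^'m \<Rightarrow> 'n set \<Rightarrow> ('n \<Rightarrow> real) \<Rightarrow> real^'n" where
  "ptB A b B l = basic_sol A b B + (\<Sum>k\<in>-B. l k *\<^sub>R basic_ray A B k)"

lemma ptB_coord:
  fixes A :: "real^'n^'m"
  assumes "is_basis A B" "k \<notin> B"
  shows "ptB A b B l $ k = l k"
proof -
  have "(\<Sum>j\<in>-B. l j * basic_ray A B j $ k) = (\<Sum>j\<in>-B. if j = k then l k else 0)"
    using basic_ray_props[OF assms(1)] assms(2) by (intro sum.cong) auto
  also have "\<dots> = l k" using assms(2) by simp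
  finally show ?thesis using basic_sol_props(2)[OF assms] by (simp add: ptB_def sum_component)
qed

lemma ptB_PB:
  fixes A :: "real^'n^'m"
  assumes "is_basis A B" "\<forall>k. k \<notin> B \<longrightarrow> 0 \<le> l k"
  shows "ptB A b B l \<in> PB A b B"
proof -
  have "A *v ptB A b B l = b + (\<Sum>k\<in>-B. l k *\<^sub>R (A *v basic_ray A B k))"
    by (simp add: ptB_def matrix_vector_right_distrib vec.sum matrix_vector_mult_scaleR basic_sol_props[OF assms(1)])
  also have "\<dots> = b" using basic_ray_props(1)[OF assms(1)] by simp
  finally show ?thesis using assms ptB_coord[OF assms(1)] unfolding PB_def by auto
qed

lemma ptB_cong:
  assumes "\<forall>k. k \<notin> B \<longrightarrow> l k = l' k"
  shows "ptB A b B l = ptB A b B l'"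
  using assms unfolding ptB_def by (auto intro!: sum.cong)

lemma PB_ptB:
  fixes A :: "real^'n^'m"
  assumes "is_basis A B" "x \<in> PB A b B"
  shows "x = ptB A b B (\<lambda>k. x $ k)"
proof -
  have p: "ptB A b B (\<lambda>k. x $ k) \<in> PB A b B" using assms(2) ptB_PB[OF assms(1)] unfolding PB_def by auto
  have "x - ptB A b B (\<lambda>k. x $ k) = 0"
    using assms(2) p ptB_coord[OF assms(1)]
    by (intro basis_uniq[OF assms(1)]) (auto simp: PB_def matrix_vector_mult_diff_distrib)
  then show ?thesis by simp
qed

lemma ptB_comb:
  assumes "finite S" "sum c S = 1"
  shows "(\<Sum>i\<in>S. c i *\<^sub>R ptB A b B (l i)) = ptB A b B (\<lambda>k. \<Sum>i\<in>S. c i * l i k)"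
proof -
  have "(\<Sum>i\<in>S. c i *\<^sub>R ptB A b B (l i)) =
     (\<Sum>i\<in>S. c i *\<^sub>R basic_sol A b B) + (\<Sum>i\<in>S. \<Sum>k\<in>-B. (c i * l i k) *\<^sub>R basic_ray A B k)"
    by (simp add: ptB_def scaleR_add_right sum.distrib scaleR_sum_right)
  also have "\<dots> = basic_sol A b B + (\<Sum>k\<in>-B. \<Sum>i\<in>S. (c i * l i k) *\<^sub>R basic_ray A B k)"
  proof -
    have "(\<Sum>i\<in>S. c i *\<^sub>R basic_sol A b B) = basic_sol A b B"
      using assms(2) by (simp add: scaleR_sum_left[symmetric])
    moreover have "(\<Sum>i\<in>S. \<Sum>k\<in>-B. (c i * l i k) *\<^sub>R basic_ray A B k) = (\<Sum>k\<in>-B. \<Sum>i\<in>S. (c i * l i k) *\<^sub>R basic_ray A B k)"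
      by (rule sum.swap)
    ultimately show ?thesis by simp
  qed
  also have "\<dots> = ptB A b B (\<lambda>k. \<Sum>i\<in>S. c i * l i k)"
    by (simp add: ptB_def scaleR_sum_left)
  finally show ?thesis .
qed

lemma ptB_two:
  assumes "u + v = 1"
  shows "u *\<^sub>R ptB A b B l + v *\<^sub>R ptB A b B l' = ptB A b B (\<lambda>k. u * l k + v * l' k)"
proof -
  have "u *\<^sub>R ptB A b B l + v *\<^sub>R ptB A b B l' = (u + v) *\<^sub>R basic_sol A b B +
     (\<Sum>k\<in>-B. (u * l k + v * l' k) *\<^sub>R basic_ray A B k)"
    by (simp add: ptB_def scaleR_add_right scaleR_add_left sum.distrib scaleR_sum_right algebra_simps)
  then show ?thesis using assms by (simp add: ptB_def)
qed

lemma ptB_single: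
  assumes "j \<notin> B"
  shows "ptB A b B (\<lambda>k. if k = j then t else 0) = basic_sol A b B + t *\<^sub>R basic_ray A B j"
proof -
  have "(\<Sum>k\<in>-B. (if k = j then t else 0) *\<^sub>R basic_ray A B k) = (\<Sum>k\<in>-B. if k = j then t *\<^sub>R basic_ray A B j else 0)"
    by (intro sum.cong) auto
  then show ?thesis using assms by (simp add: ptB_def)
qed

lemma ediv_lin: "ediv t e = t * ediv 1 e"
  unfolding ediv_def by auto

lemma convex_PB: "convex (PB A b B)"
  unfolding convex_def PB_def
  by (auto simp: matrix_vector_right_distrib matrix_vector_mult_scaleR scaleR_add_left[symmetric])

lemma lin_comb_sum:
  "(\<Sum>j\<in>J. ediv ((u *\<^sub>R x + v *\<^sub>R y) $ j) (e j)) =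
     u * (\<Sum>j\<in>J. ediv (x $ j) (e j)) + v * (\<Sum>j\<in>J. ediv (y $ j) (e j))"
  by (subst (1 2 3) ediv_lin) (simp add: sum.distrib sum_distrib_left algebra_simps)

lemma convex_le:
  assumes "convex P"
  shows "convex {x \<in> P. (\<Sum>j\<in>J. ediv (x $ j) (e j)) \<le> 1}"
proof (rule convexI)
  fix x y and u v :: real
  assume x: "x \<in> {x \<in> P. (\<Sum>j\<in>J. ediv (x $ j) (e j)) \<le> 1}" and y: "y \<in> {x \<in> P. (\<Sum>j\<in>J. ediv (x $ j) (e j)) \<le> 1}"
    and "0 \<le> u" "0 \<le> v" "u + v = 1"
  then have uv: "0 \<le> u \<and> 0 \<le> v \<and> u + v = 1" by simp
  have "u * (\<Sum>j\<in>J. ediv (x $ j) (e j)) \<le> u * 1" using x uv by (intro mult_left_mono) auto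
  moreover have "v * (\<Sum>j\<in>J. ediv (y $ j) (e j)) \<le> v * 1" using y uv by (intro mult_left_mono) auto
  ultimately have "(\<Sum>j\<in>J. ediv ((u *\<^sub>R x + v *\<^sub>R y) $ j) (e j)) \<le> 1"
    unfolding lin_comb_sum using uv by linarith
  moreover have "u *\<^sub>R x + v *\<^sub>R y \<in> P" using x y uv assms convexD by blast
  ultimately show "u *\<^sub>R x + v *\<^sub>R y \<in> {x \<in> P. (\<Sum>j\<in>J. ediv (x $ j) (e j)) \<le> 1}" by simp
qed

lemma convex_ge:
  assumes "convex P"
  shows "convex {x \<in> P. (\<Sum>j\<in>J. ediv (x $ j) (e j)) \<ge> 1}"
proof (rule convexI)
  fix x y and u v :: real
  assume x: "x \<in> {x \<in> P. (\<Sum>j\<in>J. ediv (x $ j) (e j)) \<ge> 1}" and y: "y \<in> {x \<in> P. (\<Sum>j\<in>J. ediv (x $ j) (e j)) \<ge> 1}"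
    and "0 \<le> u" "0 \<le> v" "u + v = 1"
  then have uv: "0 \<le> u \<and> 0 \<le> v \<and> u + v = 1" by simp
  have "u * (\<Sum>j\<in>J. ediv (x $ j) (e j)) \<ge> u * 1" using x uv by (intro mult_left_mono) auto
  moreover have "v * (\<Sum>j\<in>J. ediv (y $ j) (e j)) \<ge> v * 1" using y uv by (intro mult_left_mono) auto
  ultimately have "(\<Sum>j\<in>J. ediv ((u *\<^sub>R x + v *\<^sub>R y) $ j) (e j)) \<ge> 1"
    unfolding lin_comb_sum using uv by linarith
  moreover have "u *\<^sub>R x + v *\<^sub>R y \<in> P" using x y uv assms convexD by blast
  ultimately show "u *\<^sub>R x + v *\<^sub>R y \<in> {x \<in> P. (\<Sum>j\<in>J. ediv (x $ j) (e j)) \<ge> 1}" by simp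
qed

theorem proposition1:
  fixes A :: "real^'n^'m" and b :: "real^'m" and B :: "'n set"
    and C :: "(real^'n) set"
  assumes "rank A = CARD('m)"
    and "is_basis A B"
    and "\<forall>i. 0 \<le> basic_sol A b B $ i"
    and "open C" and "convex C"
    and "basic_sol A b B \<notin> closure C"
    and "\<forall>j. j \<notin> B \<and> alpha (basic_sol A b B) (basic_ray A B j) C = \<infinity>
              \<and> beta (basic_sol A b B) (basic_ray A B j) C = -\<infinity>
           \<longrightarrow> basic_ray A B j \<in> recc C"
    and "bounded C"
  shows "convex hull {x \<in> PB A b B - C.
            (\<Sum>j\<in>-B. ediv (x $ j) (alpha (basic_sol A b B) (basic_ray A B j) C)) \<le> 1}
         = {x \<in> PB A b B.
            (\<Sum>j\<in>-B. ediv (x $ j) (alpha (basic_sol A b B) (basic_ray A B j) C)) \<le> 1}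
    \<and> convex hull {x \<in> PB A b B - C.
            (\<Sum>j\<in>-B. ediv (x $ j) (beta (basic_sol A b B) (basic_ray A B j) C)) \<ge> 1}
         = {x \<in> PB A b B.
            (\<Sum>j\<in>-B. ediv (x $ j) (beta (basic_sol A b B) (basic_ray A B j) C)) \<ge> 1}"
    (is "?H1 = ?S1 \<and> ?H2 = ?S2")
proof -
  let ?xb = "basic_sol A b B"
  let ?r = "basic_ray A B"
  let ?al = "\<lambda>j. alpha ?xb (?r j) C"
  let ?be = "\<lambda>j. beta ?xb (?r j) C"
  have bas: "is_basis A B" by fact
  have sub1: "?H1 \<subseteq> ?S1"
    by (rule hull_minimal) (auto intro: convex_le convex_PB)
  have sub2: "?H2 \<subseteq> ?S2"
    by (rule hull_minimal) (auto intro: convex_ge convex_PB)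
  have xbC: "?xb \<notin> C" using assms(6) closure_subset by blast
  have xb0: "?xb = ptB A b B (\<lambda>k. 0)" by (simp add: ptB_def)
  show ?thesis
  proof (cases "C = {}")
    case True
    then show ?thesis using sub1 sub2 hull_subset[of ?S1 convex] hull_subset[of ?S2 convex] by auto
  next
    case Cne: False
    define T where "T = (\<lambda>j. {t. 0 \<le> t \<and> ?xb + t *\<^sub>R ?r j \<in> C})"
    have nr: "?r j \<noteq> 0" if "j \<notin> B" for j
      using basic_ray_props(2)[OF bas that] by auto
    have Tne: "T j \<noteq> {}" if j: "j \<notin> B" for j
    proof
      assume "T j = {}"
      then have E: "{t. 0 \<le> t \<and> ?xb + t *\<^sub>R ?r j \<in> C} = {}" by (simp add: T_def)
      have "?al j = \<infinity>" "?be j = -\<infinity>"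
        unfolding alpha_def beta_def E by (simp_all add: top_ereal_def bot_ereal_def)
      then have "?r j \<in> recc C" using assms(7) j by blast
      then show False using not_recc[OF assms(8) Cne nr[OF j]] by blast
    qed
    note RF = ray_facts[OF assms(4) assms(8) assms(6) nr T_def[THEN fun_cong] Tne]
    define a where "a = (\<lambda>j. Inf (T j))"
    define be where "be = (\<lambda>j. Sup (T j))"
    have ala: "?al j = ereal (a j)" if "j \<notin> B" for j
      using RF(1)[OF that that] unfolding alpha_def a_def T_def by simp
    have beb: "?be j = ereal (be j)" if "j \<notin> B" for j
      using RF(2)[OF that that] unfolding beta_def be_def T_def by simp
    have a0: "0 < a j" if "j \<notin> B" for j using RF(3)[OF that that] a_def by simp
    have aC: "?xb + a j *\<^sub>R ?r j \<notin> C" if "j \<notin> B" for j using RF(4)[OF that that] a_def by simp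
    have b0: "0 < be j" if "j \<notin> B" for j using RF(5)[OF that that] be_def by simp
    have bC: "?xb + t *\<^sub>R ?r j \<notin> C" if "j \<notin> B" "be j \<le> t" for j t
      using RF(6)[OF that(1) that(1)] that be_def by simp
    have sa: "(\<Sum>j\<in>-B. ediv (l j) (?al j)) = (\<Sum>j\<in>-B. l j / a j)" for l
      by (intro sum.cong) (auto simp: ala ediv_def)
    have sb: "(\<Sum>j\<in>-B. ediv (l j) (?be j)) = (\<Sum>j\<in>-B. l j / be j)" for l
      by (intro sum.cong) (auto simp: beb ediv_def)
    have sup1: "?S1 \<subseteq> ?H1"
    proof
      fix x assume x: "x \<in> ?S1"
      have xP: "x \<in> PB A b B" using x by simp
      have xpos: "0 \<le> x $ k" if "k \<notin> B" for k using xP that unfolding PB_def by auto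
      define w where "w = (\<lambda>k. x $ k / a k)"
      define s where "s = sum w (-B)"
      have w0: "0 \<le> w k" if "k \<notin> B" for k using xpos[OF that] a0[OF that] by (simp add: w_def)
      have s1: "s \<le> 1" using x sa[of "\<lambda>j. x $ j"] by (simp add: s_def w_def)
      have s0: "0 \<le> s" unfolding s_def using w0 by (intro sum_nonneg) auto
      have "?xb \<in> PB A b B" using ptB_PB[OF bas, of "\<lambda>k. 0" b] by (simp add: xb0)
      moreover have "(\<Sum>j\<in>-B. ediv (?xb $ j) (?al j)) \<le> 1"
        using sa[of "\<lambda>j. ?xb $ j"] basic_sol_props(2)[OF bas] by simp
      ultimately have xbH: "?xb \<in> ?H1" using xbC by (intro hull_inc) auto
      show "x \<in> ?H1"
      proof (cases "s = 0")
        case True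
        then have "\<forall>k\<in>-B. w k = 0" using w0 unfolding s_def by (subst (asm) sum_nonneg_eq_0_iff) auto
        then have "\<forall>k. k \<notin> B \<longrightarrow> x $ k = 0" using a0 by (fastforce simp: w_def)
        then have "x = ?xb" using PB_ptB[OF bas xP] xb0 ptB_cong[of B "\<lambda>k. x $ k" "\<lambda>k. 0" A b] by metis
        then show ?thesis using xbH by simp
      next
        case False
        then have spos: "0 < s" using s0 by simp
        define e where "e = (\<lambda>j k. if k = j then a j else (0::real))"
        have vS: "ptB A b B (e j) \<in> ?H1" if j: "j \<in> -B" for j
        proof -
          have "ptB A b B (e j) \<in> PB A b B" using a0 j by (intro ptB_PB[OF bas]) (auto simp: e_def less_imp_le)
          moreover have "ptB A b B (e j) \<notin> C" using aC[of j] j ptB_single[of j B A b "a j"] by (simp add: e_def)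
          moreover have "(\<Sum>k\<in>-B. ediv (ptB A b B (e j) $ k) (?al k)) \<le> 1"
          proof -
            have "(\<Sum>k\<in>-B. ediv (ptB A b B (e j) $ k) (?al k)) = (\<Sum>k\<in>-B. e j k / a k)"
              using sa[of "\<lambda>k. ptB A b B (e j) $ k"] ptB_coord[OF bas] by simp
            also have "\<dots> = (\<Sum>k\<in>-B. if k = j then 1 else 0)"
              using a0 by (intro sum.cong) (fastforce simp: e_def)+
            also have "\<dots> = 1" using j by simp
            finally show ?thesis by simp
          qed
          ultimately show ?thesis by (intro hull_inc) auto
        qed
        define z where "z = (\<Sum>j\<in>-B. (w j / s) *\<^sub>R ptB A b B (e j))"
        have sw: "(\<Sum>j\<in>-B. w j / s) = 1" using spos by (simp add: s_def sum_divide_distrib[symmetric])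
        have zH: "z \<in> ?H1" unfolding z_def
          using vS w0 spos by (intro convex_sum[OF finite convex_convex_hull sw]) auto
        have "z = ptB A b B (\<lambda>k. \<Sum>j\<in>-B. w j / s * e j k)"
          unfolding z_def by (rule ptB_comb[OF finite sw])
        then have "(1 - s) *\<^sub>R ?xb + s *\<^sub>R z = ptB A b B (\<lambda>k. (1 - s) * 0 + s * (\<Sum>j\<in>-B. w j / s * e j k))"
          using xb0 ptB_two[of "1 - s" s A b B "\<lambda>k. 0"] by simp
        also have "\<dots> = ptB A b B (\<lambda>k. x $ k)"
        proof (rule ptB_cong, intro allI impI)
          fix k assume k: "k \<notin> B"
          have "(\<Sum>j\<in>-B. w j / s * e j k) = (\<Sum>j\<in>-B. if j = k then w k / s * a k else 0)"
            by (intro sum.cong) (auto simp: e_def)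
          also have "\<dots> = w k / s * a k" using k by simp
          finally show "(1 - s) * 0 + s * (\<Sum>j\<in>-B. w j / s * e j k) = x $ k"
            using spos a0[OF k] by (simp add: w_def)
        qed
        also have "\<dots> = x" using PB_ptB[OF bas xP] by simp
        finally have "x = (1 - s) *\<^sub>R ?xb + s *\<^sub>R z" by simp
        then show ?thesis using convexD[OF convex_convex_hull xbH zH, of "1 - s" s] s1 s0 by simp
      qed
    qed
    have sup2: "?S2 \<subseteq> ?H2"
    proof
      fix x assume x: "x \<in> ?S2"
      have xP: "x \<in> PB A b B" using x by simp
      have xpos: "0 \<le> x $ k" if "k \<notin> B" for k using xP that unfolding PB_def by auto
      define s where "s = (\<Sum>j\<in>-B. x $ j / be j)"
      have s1: "1 \<le> s" using x sb[of "\<lambda>j. x $ j"] by (simp add: s_def)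
      define e where "e = (\<lambda>j k. if k = j then s * be j else (0::real))"
      have vS: "ptB A b B (e j) \<in> ?H2" if j: "j \<in> -B" for j
      proof -
        have "ptB A b B (e j) \<in> PB A b B" using b0 j s1 by (intro ptB_PB[OF bas]) (auto simp: e_def less_imp_le)
        moreover have "be j \<le> s * be j" using b0[of j] j s1 by simp
        then have "ptB A b B (e j) \<notin> C" using bC[of j "s * be j"] j ptB_single[of j B A b "s * be j"] by (simp add: e_def)
        moreover have "(\<Sum>k\<in>-B. ediv (ptB A b B (e j) $ k) (?be k)) \<ge> 1"
        proof -
          have "(\<Sum>k\<in>-B. ediv (ptB A b B (e j) $ k) (?be k)) = (\<Sum>k\<in>-B. e j k / be k)"
            using sb[of "\<lambda>k. ptB A b B (e j) $ k"] ptB_coord[OF bas] by simp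
          also have "\<dots> = (\<Sum>k\<in>-B. if k = j then s else 0)"
            using b0 by (intro sum.cong) (fastforce simp: e_def)+
          also have "\<dots> = s" using j by simp
          finally show ?thesis using s1 by simp
        qed
        ultimately show ?thesis by (intro hull_inc) auto
      qed
      define c where "c = (\<lambda>j. x $ j / be j / s)"
      have "(\<Sum>j\<in>-B. c j) = s / s" unfolding c_def s_def by (rule sum_divide_distrib[symmetric])
      then have sw: "(\<Sum>j\<in>-B. c j) = 1" using s1 by simp
      have c0: "0 \<le> c j" if "j \<in> -B" for j using xpos[of j] b0[of j] that s1 by (simp add: c_def)
      have zH: "(\<Sum>j\<in>-B. c j *\<^sub>R ptB A b B (e j)) \<in> ?H2"
        using vS c0 by (intro convex_sum[OF finite convex_convex_hull sw]) auto
      have "(\<Sum>j\<in>-B. c j *\<^sub>R ptB A b B (e j)) = ptB A b B (\<lambda>k. \<Sum>j\<in>-B. c j * e j k)"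
        by (rule ptB_comb[OF finite sw])
      also have "\<dots> = ptB A b B (\<lambda>k. x $ k)"
      proof (rule ptB_cong, intro allI impI)
        fix k assume k: "k \<notin> B"
        have "(\<Sum>j\<in>-B. c j * e j k) = (\<Sum>j\<in>-B. if j = k then c k * (s * be k) else 0)"
          by (intro sum.cong) (auto simp: e_def)
        also have "\<dots> = c k * (s * be k)" using k by simp
        finally show "(\<Sum>j\<in>-B. c j * e j k) = x $ k"
          using s1 b0[OF k] by (simp add: c_def)
      qed
      also have "\<dots> = x" using PB_ptB[OF bas xP] by simp
      finally show "x \<in> ?H2" using zH by simp
    qed
    show ?thesis using sub1 sub2 sup1 sup2 by blast
  qed
qed

end
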